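(* Let $(G,M,\Delta)$ be a Garside structure, $(H,N,\delta)$ a parabolic substructure, and $T$ the set of $(H,N)$-reduced elements of $G$. Let $\theta\in T\setminus M$ with right $\Delta$-form $\theta=c\Delta^{-p}$, $p\ge1$, and let $b\in N$. Then $bc$ is unmovable and $bc\Delta^{-p}$ is the right $\Delta$-form of $b\theta$.
   Context: Let $G$ be a group and $M$ a submonoid with $M\cap M^{-1}=\{1\}$. Define $\alpha\le_L\beta$ iff $\alpha^{-1}\beta\in M$, and $\alpha\le_R\beta$ iff $\beta\alpha^{-1}\in M$. For $a\in M$ let $\mathrm{Div}_L(a)=\{b\in M: b\le_L a\}$, $\mathrm{Div}_R(a)=\{b\in M: b\le_R a\}$; $a$ is balanced if these coincide, and then $\mathrm{Div}(a)$ denotes this set. $M$ is Noetherian if each $a\in M$ admits an $n$ such that $a$ is not a product of more than $n$ non-trivial factors. A Garside structure $(G,M,\Delta)$: $\Delta\in M$ balanced, $M$ Noetherian, $\mathrm{Div}(\Delta)$ finite and generating $M$ as a monoid and $G$ as a group, $(G,\le_L)$ a lattice with meet $\wedge_L$. A parabolic substructure $(H,N,\delta)$: $\delta\in M$ balanced, $H$ (resp. $N$) the subgroup (resp. submonoid) generated by $\mathrm{Div}(\delta)$, and $\mathrm{Div}(\delta)=\mathrm{Div}(\Delta)\cap N$; it is assumed $H\ne\{1\}$. Put $\omega=\delta^{-1}\Delta$. $a\in M$ is unmovable if $\Delta\not\le_L a$; every $\alpha\in G$ has a unique right $\Delta$-form $\alpha=a\Delta^p$ ($a\in M$ unmovable,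 $p\in\mathbb Z$). $a\in M$ is $N$-reduced if $a\wedge_L\delta=1$. $\alpha$ with right $\Delta$-form $a\Delta^p$ is $(H,N)$-reduced if $a$ is $N$-reduced and either $p=0$, or $p<0$ and $\omega\not\le_L a$. *)

theory Defs
  imports "HOL-Algebra.Algebra"
begin

definition submonoid_of :: "('a, 'b) monoid_scheme \<Rightarrow> 'a set \<Rightarrow> bool" where
  "submonoid_of G M \<longleftrightarrow> M \<subseteq> carrier G \<and> \<one>\<^bsub>G\<^esub> \<in> M
     \<and> (\<forall>x\<in>M. \<forall>y\<in>M. x \<otimes>\<^bsub>G\<^esub> y \<in> M)"

definition pointed :: "('a, 'b) monoid_scheme \<Rightarrow> 'a set \<Rightarrow> bool" where
  "pointed G M \<longleftrightarrow> M \<inter> (\<lambda>x. inv\<^bsub>G\<^esub> x) ` M = {\<one>\<^bsub>G\<^esub>}"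

definition leL :: "('a, 'b) monoid_scheme \<Rightarrow> 'a set \<Rightarrow> 'a \<Rightarrow> 'a \<Rightarrow> bool" where
  "leL G M x y \<longleftrightarrow> inv\<^bsub>G\<^esub> x \<otimes>\<^bsub>G\<^esub> y \<in> M"

definition leR :: "('a, 'b) monoid_scheme \<Rightarrow> 'a set \<Rightarrow> 'a \<Rightarrow> 'a \<Rightarrow> bool" where
  "leR G M x y \<longleftrightarrow> y \<otimes>\<^bsub>G\<^esub> inv\<^bsub>G\<^esub> x \<in> M"

definition DivL :: "('a, 'b) monoid_scheme \<Rightarrow> 'a set \<Rightarrow> 'a \<Rightarrow> 'a set" where
  "DivL G M a = {b \<in> M. leL G M b a}"

definition DivR :: "('a, 'b) monoid_scheme \<Rightarrow> 'a set \<Rightarrow> 'a \<Rightarrow> 'a set" where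
  "DivR G M a = {b \<in> M. leR G M b a}"

definition balanced :: "('a, 'b) monoid_scheme \<Rightarrow> 'a set \<Rightarrow> 'a \<Rightarrow> bool" where
  "balanced G M a \<longleftrightarrow> a \<in> M \<and> DivL G M a = DivR G M a"

text \<open>Div(a), meaningful for balanced a.\<close>
definition Div :: "('a, 'b) monoid_scheme \<Rightarrow> 'a set \<Rightarrow> 'a \<Rightarrow> 'a set" where
  "Div G M a = DivL G M a"

definition lprod :: "('a, 'b) monoid_scheme \<Rightarrow> 'a list \<Rightarrow> 'a" where
  "lprod G xs = foldr (\<lambda>x y. x \<otimes>\<^bsub>G\<^esub> y) xs \<one>\<^bsub>G\<^esub>"

definition noetherian :: "('a, 'b) monoid_scheme \<Rightarrow> 'a set \<Rightarrow> bool" where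
  "noetherian G M \<longleftrightarrow> (\<forall>a\<in>M. \<exists>n::nat. \<forall>xs. set xs \<subseteq> M - {\<one>\<^bsub>G\<^esub>} \<and> lprod G xs = a
      \<longrightarrow> length xs \<le> n)"

definition monoid_gen :: "('a, 'b) monoid_scheme \<Rightarrow> 'a set \<Rightarrow> 'a set" where
  "monoid_gen G S = {lprod G xs | xs. set xs \<subseteq> S}"

definition is_glbL :: "('a, 'b) monoid_scheme \<Rightarrow> 'a set \<Rightarrow> 'a \<Rightarrow> 'a \<Rightarrow> 'a \<Rightarrow> bool" where
  "is_glbL G M x y z \<longleftrightarrow> z \<in> carrier G \<and> leL G M z x \<and> leL G M z y
     \<and> (\<forall>w\<in>carrier G. leL G M w x \<and> leL G M w y \<longrightarrow> leL G M w z)"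

definition is_lubL :: "('a, 'b) monoid_scheme \<Rightarrow> 'a set \<Rightarrow> 'a \<Rightarrow> 'a \<Rightarrow> 'a \<Rightarrow> bool" where
  "is_lubL G M x y z \<longleftrightarrow> z \<in> carrier G \<and> leL G M x z \<and> leL G M y z
     \<and> (\<forall>w\<in>carrier G. leL G M x w \<and> leL G M y w \<longrightarrow> leL G M z w)"

definition lattice_L :: "('a, 'b) monoid_scheme \<Rightarrow> 'a set \<Rightarrow> bool" where
  "lattice_L G M \<longleftrightarrow> (\<forall>x\<in>carrier G. \<forall>y\<in>carrier G.
      (\<exists>z. is_glbL G M x y z) \<and> (\<exists>z. is_lubL G M x y z))"

definition meetL :: "('a, 'b) monoid_scheme \<Rightarrow> 'a set \<Rightarrow> 'a \<Rightarrow> 'a \<Rightarrow> 'a" where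
  "meetL G M x y = (THE z. is_glbL G M x y z)"

definition garside :: "('a, 'b) monoid_scheme \<Rightarrow> 'a set \<Rightarrow> 'a \<Rightarrow> bool" where
  "garside G M \<Delta> \<longleftrightarrow> group G \<and> submonoid_of G M \<and> pointed G M
     \<and> balanced G M \<Delta> \<and> noetherian G M \<and> finite (Div G M \<Delta>)
     \<and> monoid_gen G (Div G M \<Delta>) = M \<and> generate G (Div G M \<Delta>) = carrier G
     \<and> lattice_L G M"

definition parabolic :: "('a, 'b) monoid_scheme \<Rightarrow> 'a set \<Rightarrow> 'a \<Rightarrow> 'a set \<Rightarrow> 'a set \<Rightarrow> 'a \<Rightarrow> bool" where
  "parabolic G M \<Delta> H N \<delta> \<longleftrightarrow> \<delta> \<in> M \<and> balanced G M \<delta>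
     \<and> H = generate G (Div G M \<delta>) \<and> N = monoid_gen G (Div G M \<delta>)
     \<and> Div G M \<delta> = Div G M \<Delta> \<inter> N \<and> H \<noteq> {\<one>\<^bsub>G\<^esub>}"

definition unmovable :: "('a, 'b) monoid_scheme \<Rightarrow> 'a set \<Rightarrow> 'a \<Rightarrow> 'a \<Rightarrow> bool" where
  "unmovable G M \<Delta> a \<longleftrightarrow> a \<in> M \<and> \<not> leL G M \<Delta> a"

definition right_form :: "('a, 'b) monoid_scheme \<Rightarrow> 'a set \<Rightarrow> 'a \<Rightarrow> 'a \<Rightarrow> 'a \<Rightarrow> int \<Rightarrow> bool" where
  "right_form G M \<Delta> \<alpha> a p \<longleftrightarrow> unmovable G M \<Delta> a \<and> \<alpha> = a \<otimes>\<^bsub>G\<^esub> (\<Delta> [^]\<^bsub>G\<^esub> p)"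

definition N_reduced :: "('a, 'b) monoid_scheme \<Rightarrow> 'a set \<Rightarrow> 'a \<Rightarrow> 'a \<Rightarrow> bool" where
  "N_reduced G M \<delta> a \<longleftrightarrow> a \<in> M \<and> meetL G M a \<delta> = \<one>\<^bsub>G\<^esub>"

definition HN_reduced :: "('a, 'b) monoid_scheme \<Rightarrow> 'a set \<Rightarrow> 'a \<Rightarrow> 'a \<Rightarrow> 'a \<Rightarrow> bool" where
  "HN_reduced G M \<Delta> \<delta> \<alpha> \<longleftrightarrow> \<alpha> \<in> carrier G \<and> (\<exists>a p. right_form G M \<Delta> \<alpha> a p
     \<and> N_reduced G M \<delta> a
     \<and> (p = 0 \<or> (p < 0 \<and> \<not> leL G M (inv\<^bsub>G\<^esub> \<delta> \<otimes>\<^bsub>G\<^esub> \<Delta>) a)))"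

end

theory Submission
  imports Defs
begin

lemma (in group) cancel1 [simp]: "x \<in> carrier G \<Longrightarrow> y \<in> carrier G \<Longrightarrow> x \<otimes> (inv x \<otimes> y) = y"
  by (simp add: m_assoc[symmetric])
lemma (in group) cancel2 [simp]: "x \<in> carrier G \<Longrightarrow> y \<in> carrier G \<Longrightarrow> inv x \<otimes> (x \<otimes> y) = y"
  by (simp add: m_assoc[symmetric])

locale GS = group G for G (structure) +
  fixes M :: "'a set" and D :: 'a and d :: 'a
  assumes sub: "M \<subseteq> carrier G" and oneM: "\<one> \<in> M"
    and multM: "x \<in> M \<Longrightarrow> y \<in> M \<Longrightarrow> x \<otimes> y \<in> M"
    and pt: "z \<in> M \<Longrightarrow> inv z \<in> M \<Longrightarrow> z = \<one>"
    and balD: "balanced G M D" and bald: "balanced G M d"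
    and genD: "monoid_gen G (Div G M D) = M"
    and lat: "lattice_L G M"
    and par: "Div G M d = Div G M D \<inter> monoid_gen G (Div G M d)"
begin

lemma inM[simp]: "x \<in> M \<Longrightarrow> x \<in> carrier G" using sub by auto

lemma D_M[simp]: "D \<in> M" "d \<in> M" using balD bald by (auto simp: balanced_def)

lemma D_c[simp]: "D \<in> carrier G" "d \<in> carrier G" by auto

lemma Div_L: "balanced G M B \<Longrightarrow> x \<in> Div G M B \<longleftrightarrow> x \<in> M \<and> inv x \<otimes> B \<in> M"
  by (simp add: Div_def DivL_def leL_def)

lemma Div_R: "balanced G M B \<Longrightarrow> x \<in> Div G M B \<longleftrightarrow> x \<in> M \<and> B \<otimes> inv x \<in> M"
  by (simp add: Div_def balanced_def DivR_def leR_def)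

lemma conj_Div:
  assumes B: "balanced G M B" and x: "x \<in> Div G M B"
  shows "inv B \<otimes> x \<otimes> B \<in> Div G M B" "B \<otimes> x \<otimes> inv B \<in> Div G M B"
proof -
  have BM: "B \<in> M" using B by (simp add: balanced_def)
  have xM: "x \<in> M" using x B Div_L by auto
  have m: "inv x \<otimes> B \<in> M" using x B Div_L by auto
  have "B \<otimes> inv (inv x \<otimes> B) = x" using BM xM by (simp add: inv_mult_group m_assoc)
  hence "inv x \<otimes> B \<in> Div G M B" using Div_R[OF B] m xM by simp
  hence y: "inv (inv x \<otimes> B) \<otimes> B \<in> M" using Div_L[OF B] by simp
  have e1: "inv (inv x \<otimes> B) \<otimes> B = inv B \<otimes> x \<otimes> B" using BM xM by (simp add: inv_mult_group m_assoc)
  have "B \<otimes> inv (inv B \<otimes> x \<otimes> B) = inv x \<otimes> B" using BM xM by (simp add: inv_mult_group m_assoc)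
  thus "inv B \<otimes> x \<otimes> B \<in> Div G M B" using Div_R[OF B] y e1 m by simp
  have m': "B \<otimes> inv x \<in> M" using x B Div_R by auto
  have "inv (B \<otimes> inv x) \<otimes> B = x" using BM xM by (simp add: inv_mult_group m_assoc)
  hence "B \<otimes> inv x \<in> Div G M B" using Div_L[OF B] m' xM by simp
  hence z: "B \<otimes> inv (B \<otimes> inv x) \<in> M" using Div_R[OF B] by simp
  have e2: "B \<otimes> inv (B \<otimes> inv x) = B \<otimes> x \<otimes> inv B" using BM xM by (simp add: inv_mult_group m_assoc)
  have "inv (B \<otimes> x \<otimes> inv B) \<otimes> B = B \<otimes> inv x" using BM xM by (simp add: inv_mult_group m_assoc)
  thus "B \<otimes> x \<otimes> inv B \<in> Div G M B" using Div_L[OF B] z e2 m' by simp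
qed

lemma lprod_Nil[simp]: "lprod G [] = \<one>" by (simp add: lprod_def)
lemma lprod_Cons[simp]: "lprod G (x#xs) = x \<otimes> lprod G xs" by (simp add: lprod_def)
lemma lprod_c: "set xs \<subseteq> carrier G \<Longrightarrow> lprod G xs \<in> carrier G"
  by (induct xs) auto
lemma lprod_app: "set xs \<subseteq> carrier G \<Longrightarrow> set ys \<subseteq> carrier G \<Longrightarrow> lprod G (xs @ ys) = lprod G xs \<otimes> lprod G ys"
  by (induct xs) (auto simp: m_assoc lprod_c)

lemma Div_sub: "balanced G M B \<Longrightarrow> Div G M B \<subseteq> M" using Div_L by blast

lemma gen_sub: "S \<subseteq> M \<Longrightarrow> monoid_gen G S \<subseteq> M"
proof -
  assume S: "S \<subseteq> M"
  have "set xs \<subseteq> S \<Longrightarrow> lprod G xs \<in> M" for xs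
    by (induct xs) (use S in \<open>auto simp: oneM multM\<close>)
  thus ?thesis by (auto simp: monoid_gen_def)
qed

lemma gen_mult: "S \<subseteq> carrier G \<Longrightarrow> x \<in> monoid_gen G S \<Longrightarrow> y \<in> monoid_gen G S \<Longrightarrow> x \<otimes> y \<in> monoid_gen G S"
  unfolding monoid_gen_def
proof clarify
  fix xs ys assume "S \<subseteq> carrier G" "set xs \<subseteq> S" "set ys \<subseteq> S"
  thus "\<exists>zs. lprod G xs \<otimes> lprod G ys = lprod G zs \<and> set zs \<subseteq> S"
    by (intro exI[of _ "xs @ ys"]) (auto simp: lprod_app)
qed

lemma gen_in: "x \<in> S \<Longrightarrow> S \<subseteq> carrier G \<Longrightarrow> x \<in> monoid_gen G S"
  unfolding monoid_gen_def by (intro CollectI exI[of _ "[x]"]) auto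

lemma conjD_M:
  assumes x: "x \<in> M" shows "inv D \<otimes> x \<otimes> D \<in> M" "D \<otimes> x \<otimes> inv D \<in> M"
proof -
  obtain xs where xs: "set xs \<subseteq> Div G M D" "x = lprod G xs" using x genD[symmetric]
    by (auto simp: monoid_gen_def)
  have DM: "Div G M D \<subseteq> carrier G" using Div_sub[OF balD] by auto
  have "set xs \<subseteq> Div G M D \<Longrightarrow> inv D \<otimes> lprod G xs \<otimes> D \<in> M \<and> D \<otimes> lprod G xs \<otimes> inv D \<in> M"
  proof (induct xs)
    case Nil thus ?case by (simp add: oneM)
  next
    case (Cons a xs)
    have a: "a \<in> Div G M D" and ac: "a \<in> carrier G" and xc: "lprod G xs \<in> carrier G"
      using Cons DM by (auto intro: lprod_c)
    have e1: "inv D \<otimes> lprod G (a#xs) \<otimes> D = (inv D \<otimes> a \<otimes> D) \<otimes> (inv D \<otimes> lprod G xs \<otimes> D)"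
      using ac xc by (simp add: m_assoc)
    have e2: "D \<otimes> lprod G (a#xs) \<otimes> inv D = (D \<otimes> a \<otimes> inv D) \<otimes> (D \<otimes> lprod G xs \<otimes> inv D)"
      using ac xc by (simp add: m_assoc)
    have "inv D \<otimes> a \<otimes> D \<in> M" "D \<otimes> a \<otimes> inv D \<in> M"
      using conj_Div[OF balD a] Div_sub[OF balD] by auto
    thus ?case unfolding e1 e2 using Cons by (auto intro: multM)
  qed
  thus "inv D \<otimes> x \<otimes> D \<in> M" "D \<otimes> x \<otimes> inv D \<in> M" using xs by auto
qed

lemma pow_M: "x \<in> M \<Longrightarrow> x [^] (n::nat) \<in> M"
  by (induct n) (auto simp: oneM multM)

lemma leL_trans: "x \<in> carrier G \<Longrightarrow> y \<in> carrier G \<Longrightarrow> z \<in> carrier G \<Longrightarrow> leL G M x y \<Longrightarrow> leL G M y z \<Longrightarrow> leL G M x z"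
  unfolding leL_def using multM[of "inv x \<otimes> y" "inv y \<otimes> z"] by (simp add: m_assoc)

lemma leL_left: "g \<in> carrier G \<Longrightarrow> x \<in> carrier G \<Longrightarrow> y \<in> carrier G \<Longrightarrow> leL G M (g \<otimes> x) (g \<otimes> y) \<longleftrightarrow> leL G M x y"
  unfolding leL_def by (simp add: m_assoc inv_mult_group)

lemma leL_refl: "x \<in> carrier G \<Longrightarrow> leL G M x x"
  unfolding leL_def by (simp add: oneM)

lemma leL_M: "x \<in> carrier G \<Longrightarrow> y \<in> M \<Longrightarrow> leL G M x (x \<otimes> y)"
  unfolding leL_def by (simp add: m_assoc[symmetric])

lemma leL_D_pow: assumes x: "x \<in> M" shows "leL G M D (x \<otimes> D [^] Suc n)"
proof -
  have "x \<otimes> D [^] Suc n = x \<otimes> (D \<otimes> D [^] n)" using nat_pow_Suc2[of D n] by simp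
  also have "\<dots> = D \<otimes> ((inv D \<otimes> x \<otimes> D) \<otimes> D [^] n)"
    using x by (simp add: m_assoc)
  finally have "x \<otimes> D [^] Suc n = D \<otimes> ((inv D \<otimes> x \<otimes> D) \<otimes> D [^] n)" .
  thus ?thesis using leL_M[of D] multM[OF conjD_M(1)[OF x] pow_M[of D n]] by simp
qed


abbreviation "N \<equiv> monoid_gen G (Div G M d)"
abbreviation "w \<equiv> inv d \<otimes> D"

lemma Divd_c: "Div G M d \<subseteq> carrier G" using Div_sub[OF bald] by auto
lemma N_M: "N \<subseteq> M" using gen_sub[OF Div_sub[OF bald]] .
lemma d_Div: "d \<in> Div G M d" using bald by (simp add: Div_L oneM)
lemma w_M: "w \<in> M" using d_Div par Div_L[OF balD] by auto
lemma w_c[simp]: "w \<in> carrier G" using w_M by simp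

lemma rho: "x \<in> Div G M d \<Longrightarrow> d [^] (k::nat) \<otimes> x \<otimes> inv (d [^] k) \<in> Div G M d"
proof (induct k)
  case 0 thus ?case using Divd_c by auto
next
  case (Suc k)
  have xc: "x \<in> carrier G" using Suc Divd_c by auto
  have "d [^] Suc k \<otimes> x \<otimes> inv (d [^] Suc k) = d \<otimes> (d [^] k \<otimes> x \<otimes> inv (d [^] k)) \<otimes> inv d"
    unfolding nat_pow_Suc2[OF D_c(2)] using xc by (simp add: inv_mult_group m_assoc del: nat_pow_Suc)
  thus ?case using conj_Div(2)[OF bald Suc(1)[OF Suc(2)]] by simp
qed

lemma N_Rpow: assumes b: "b \<in> N" shows "\<exists>k::nat. \<exists>m\<in>M. m \<otimes> b = d [^] k"
proof -
  obtain xs where xs: "set xs \<subseteq> Div G M d" "b = lprod G xs" using b by (auto simp: monoid_gen_def)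
  have "set xs \<subseteq> Div G M d \<Longrightarrow> \<exists>k::nat. \<exists>m\<in>M. m \<otimes> lprod G xs = d [^] k"
  proof (induct xs rule: rev_induct)
    case Nil thus ?case by (intro exI[of _ 0] bexI[of _ \<one>]) (auto simp: oneM)
  next
    case (snoc s xs)
    from snoc obtain k m2 where m2: "m2 \<in> M" "m2 \<otimes> lprod G xs = d [^] (k::nat)" by force
    have s: "s \<in> Div G M d" using snoc by auto
    have sc: "s \<in> carrier G" using s Divd_c by auto
    have xc: "lprod G xs \<in> carrier G" using snoc Divd_c by (auto intro: lprod_c)
    have uM: "d \<otimes> inv s \<in> M" using s Div_R[OF bald] by auto
    have "inv (d \<otimes> inv s) \<otimes> d = s" using sc by (simp add: inv_mult_group m_assoc)
    hence u: "d \<otimes> inv s \<in> Div G M d" using uM Div_L[OF bald] s Div_L[OF bald] by auto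
    define r where "r = d [^] k \<otimes> (d \<otimes> inv s) \<otimes> inv (d [^] k)"
    have rM: "r \<in> M" using rho[OF u, of k] Div_sub[OF bald] r_def by auto
    have ls: "lprod G (xs@[s]) = lprod G xs \<otimes> s" using lprod_app[of xs "[s]"] snoc Divd_c sc by auto
    have "(r \<otimes> m2) \<otimes> lprod G (xs @ [s]) = r \<otimes> (m2 \<otimes> lprod G xs) \<otimes> s"
      unfolding ls by (metis m_assoc inM m_closed xc sc rM m2(1))
    also have "\<dots> = r \<otimes> d [^] k \<otimes> s" using m2(2) by simp
    also have "\<dots> = d [^] k \<otimes> d" using sc by (simp add: r_def m2 m_assoc)
    also have "\<dots> = d [^] Suc k" by simp
    finally show ?case using rM m2 multM by blast
  qed
  thus ?thesis using xs by auto
qed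

lemma core:
  assumes e: "e \<in> M" and ew: "leL G M e w" and we: "leL G M w (d \<otimes> e)"
  shows "e = w"
proof -
  have ec: "e \<in> carrier G" using e by simp
  define e' where "e' = inv e \<otimes> w"
  define g where "g = inv w \<otimes> (d \<otimes> e)"
  have e'M: "e' \<in> M" using ew e'_def leL_def by metis
  have gM: "g \<in> M" using we g_def leL_def by metis
  have e'c: "e' \<in> carrier G" and gc: "g \<in> carrier G" using e'M gM by auto
  have 1: "g \<otimes> e' = inv D \<otimes> d \<otimes> D"
    using ec by (simp add: g_def e'_def m_assoc inv_mult_group)
  define x where "x = D \<otimes> e' \<otimes> inv D"
  define gg where "gg = D \<otimes> g \<otimes> inv D"
  have xM: "x \<in> M" using conjD_M(2)[OF e'M] x_def by simp
  have ggM: "gg \<in> M" using conjD_M(2)[OF gM] gg_def by simp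
  have xc: "x \<in> carrier G" using xM by simp
  have "gg \<otimes> x = D \<otimes> (g \<otimes> e') \<otimes> inv D" using gc e'c by (simp add: gg_def x_def m_assoc)
  also have "\<dots> = d" using 1 by (simp add: m_assoc)
  finally have ggx: "gg \<otimes> x = d" .
  have "d \<otimes> inv x = gg" using ggx[symmetric] xc ggM by (simp add: m_assoc)
  hence xd: "x \<in> Div G M d" using Div_R[OF bald] xM ggM by simp
  define y where "y = D \<otimes> e \<otimes> inv D"
  have yM: "y \<in> M" using conjD_M(2)[OF e] y_def by simp
  have "y \<otimes> x = D \<otimes> (e \<otimes> e') \<otimes> inv D" using ec e'c by (simp add: y_def x_def m_assoc)
  also have "\<dots> = D \<otimes> inv d" using ec by (simp add: e'_def m_assoc)
  finally have yx: "y \<otimes> x = D \<otimes> inv d" .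
  have xdN: "x \<otimes> d \<in> N" using gen_mult[OF Divd_c gen_in[OF xd Divd_c] gen_in[OF d_Div Divd_c]] .
  hence xdM: "x \<otimes> d \<in> M" using N_M by auto
  have "D \<otimes> inv (x \<otimes> d) = y" using yx xc yM by (simp add: inv_mult_group m_assoc[symmetric] inv_solve_right')
  hence "x \<otimes> d \<in> Div G M D" using Div_R[OF balD] xdM yM by simp
  hence "x \<otimes> d \<in> Div G M d" using par xdN by auto
  hence i1: "inv d \<otimes> inv x \<otimes> d \<in> M" using Div_L[OF bald] xc by (simp add: inv_mult_group m_assoc)
  have i2: "inv d \<otimes> x \<otimes> d \<in> M" using conj_Div(1)[OF bald xd] Div_sub[OF bald] by auto
  have "inv (inv d \<otimes> x \<otimes> d) = inv d \<otimes> inv x \<otimes> d" using xc by (simp add: inv_mult_group m_assoc)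
  hence "inv d \<otimes> x \<otimes> d = \<one>" using pt[OF i2] i1 by simp
  moreover have "x = d \<otimes> (inv d \<otimes> x \<otimes> d) \<otimes> inv d" using xc by (simp add: m_assoc)
  ultimately have "x = \<one>" by simp
  moreover have "e' = inv D \<otimes> x \<otimes> D" using e'c by (simp add: x_def m_assoc)
  ultimately have "e' = \<one>" by simp
  moreover have "w = e \<otimes> (inv e \<otimes> w)" using ec by simp
  ultimately show "e = w" using ec by (simp add: e'_def)
qed

lemma leL_1: "x \<in> M \<Longrightarrow> leL G M \<one> x" by (simp add: leL_def)

lemma Qlem: "d0 \<in> M \<Longrightarrow> \<not> leL G M w d0 \<Longrightarrow> \<not> leL G M w (d [^] (j::nat) \<otimes> d0)"
proof (induct j)
  case 0 thus ?case by simp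
next
  case (Suc j)
  define y where "y = d [^] j \<otimes> d0"
  have yM: "y \<in> M" using Suc(2) pow_M[of d j] multM y_def by simp
  have yc: "y \<in> carrier G" using yM by simp
  have eq: "d [^] Suc j \<otimes> d0 = d \<otimes> y" unfolding nat_pow_Suc2[OF D_c(2)] using Suc(2) by (simp add: y_def m_assoc del: nat_pow_Suc)
  show ?case
  proof
    assume "leL G M w (d [^] Suc j \<otimes> d0)"
    hence wdy: "leL G M w (d \<otimes> y)" using eq by simp
    obtain z where z: "is_glbL G M w y z" using lat yc w_c unfolding lattice_L_def by blast
    have zc: "z \<in> carrier G" and zw: "leL G M z w" and zy: "leL G M z y"
      and zmax: "\<And>v. v \<in> carrier G \<Longrightarrow> leL G M v w \<Longrightarrow> leL G M v y \<Longrightarrow> leL G M v z"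
      using z by (auto simp: is_glbL_def)
    define v where "v = inv d \<otimes> w"
    have vc: "v \<in> carrier G" by (simp add: v_def)
    have dv: "d \<otimes> v = w" by (simp add: v_def)
    have dw: "d \<otimes> w = D" by simp
    have "leL G M w D" using conjD_M(1)[of d] by (simp add: leL_def inv_mult_group m_assoc)
    hence "leL G M v w" using leL_left[OF D_c(2) vc w_c] dv dw by simp
    moreover have "leL G M v y" using leL_left[OF D_c(2) vc yc] dv wdy by simp
    ultimately have "leL G M v z" using zmax vc by blast
    hence wdz: "leL G M w (d \<otimes> z)" using leL_left[OF D_c(2) vc zc] dv by simp
    have "leL G M \<one> z" using zmax[of \<one>] leL_1[OF w_M] leL_1[OF yM] by simp
    hence zM: "z \<in> M" using zc by (simp add: leL_def)
    have "z = w" using core[OF zM zw wdz] .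
    hence "leL G M w y" using zy by simp
    thus False using Suc(1)[OF Suc(2,3)] y_def by simp
  qed
qed

lemma mainlem:
  assumes c: "c \<in> M" and cD: "\<not> leL G M D c" and cw: "\<not> leL G M w c" and b: "b \<in> N"
  shows "\<not> leL G M D (b \<otimes> c)"
proof
  assume h: "leL G M D (b \<otimes> c)"
  obtain k m where m: "m \<in> M" "m \<otimes> b = d [^] (k::nat)" using N_Rpow[OF b] by auto
  have bc: "b \<in> carrier G" using b N_M by auto
  have cc: "c \<in> carrier G" using c by simp
  have mc: "m \<in> carrier G" using m by simp
  have "leL G M (m \<otimes> D) (m \<otimes> (b \<otimes> c))" using h leL_left[OF mc D_c(1)] bc cc by simp
  hence h1: "leL G M (m \<otimes> D) (d [^] k \<otimes> c)" using m bc cc mc by (simp add: m_assoc[symmetric])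
  have "m \<otimes> D = D \<otimes> (inv D \<otimes> m \<otimes> D)" using mc by (simp add: m_assoc)
  hence "leL G M D (m \<otimes> D)" using leL_M[of D] conjD_M(1)[OF m(1)] by simp
  hence h2: "leL G M D (d [^] k \<otimes> c)" using leL_trans h1 mc cc by (meson D_c(1) m_closed nat_pow_closed D_c(2))
  show False
  proof (cases k)
    case 0 thus False using h2 cD cc by simp
  next
    case (Suc j)
    have "d [^] k \<otimes> c = d \<otimes> (d [^] j \<otimes> c)" unfolding Suc nat_pow_Suc2[OF D_c(2)] using cc by (simp add: m_assoc del: nat_pow_Suc)
    moreover have "D = d \<otimes> w" by simp
    ultimately have "leL G M w (d [^] j \<otimes> c)" using h2 leL_left[of d w "d [^] j \<otimes> c"] cc by simp
    thus False using Qlem[OF c cw] by simp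
  qed
qed


lemma shift_pow:
  assumes x: "x \<in> carrier G" and y: "y \<in> carrier G"
    and e: "x \<otimes> inv (D [^] (P::nat)) = y \<otimes> inv (D [^] (Q::nat))" and PQ: "P \<le> Q"
  shows "y = x \<otimes> D [^] (Q - P)"
proof -
  have "y = x \<otimes> inv (D [^] P) \<otimes> D [^] Q" using e y by (simp add: m_assoc)
  also have "D [^] Q = D [^] P \<otimes> D [^] (Q - P)" using nat_pow_mult[of D P "Q - P"] PQ by simp
  finally show ?thesis using x by (simp add: m_assoc)
qed

lemma rf_unique:
  assumes a: "a \<in> M" "\<not> leL G M D a" and c: "c \<in> M" "\<not> leL G M D c"
    and e: "c \<otimes> inv (D [^] (P::nat)) = a \<otimes> inv (D [^] (Q::nat))"
  shows "c = a"
proof (cases P Q rule: linorder_cases)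
  case less
  then obtain n where n: "Q - P = Suc n" by (metis Suc_diff_Suc)
  have "a = c \<otimes> D [^] Suc n" using shift_pow[OF _ _ e] less n a c by simp
  thus ?thesis using leL_D_pow[OF c(1), of n] a by simp
next
  case equal thus ?thesis using e a c by simp
next
  case greater
  then obtain n where n: "P - Q = Suc n" by (metis Suc_diff_Suc)
  have "c = a \<otimes> D [^] Suc n" using shift_pow[OF _ _ e[symmetric]] greater n a c by simp
  thus ?thesis using leL_D_pow[OF a(1), of n] c by simp
qed

end

theorem lemma3p9:
  fixes G (structure)
  assumes "garside G M \<Delta>"
    and "parabolic G M \<Delta> H N \<delta>"
    and "T = {\<alpha> \<in> carrier G. HN_reduced G M \<Delta> \<delta> \<alpha>}"
    and "\<theta> \<in> T - M"
    and "right_form G M \<Delta> \<theta> c (- p)"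
    and "(p::int) \<ge> 1"
    and "b \<in> N"
  shows "unmovable G M \<Delta> (b \<otimes>\<^bsub>G\<^esub> c)
    \<and> right_form G M \<Delta> (b \<otimes>\<^bsub>G\<^esub> \<theta>) (b \<otimes>\<^bsub>G\<^esub> c) (- p)"
proof -
  have gr: "group G" and sm: "submonoid_of G M" and po: "pointed G M" and bD: "balanced G M \<Delta>"
    and gD: "monoid_gen G (Div G M \<Delta>) = M" and lt: "lattice_L G M"
    using assms(1) unfolding garside_def by blast+
  have bd: "balanced G M \<delta>" and Ndef: "N = monoid_gen G (Div G M \<delta>)"
    and pr: "Div G M \<delta> = Div G M \<Delta> \<inter> N"
    using assms(2) unfolding parabolic_def by blast+
  interpret group G by (rule gr)
  have ptz: "z = \<one>" if "z \<in> M" "inv z \<in> M" for z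
  proof -
    have "z \<in> M \<inter> (\<lambda>x. inv x) ` M" using that sm
      by (auto simp: submonoid_of_def intro!: image_eqI[of z _ "inv z"])
    thus ?thesis using po by (auto simp: pointed_def)
  qed
  have s1: "M \<subseteq> carrier G" "\<one> \<in> M" "\<And>x y. x \<in> M \<Longrightarrow> y \<in> M \<Longrightarrow> x \<otimes> y \<in> M"
    using sm unfolding submonoid_of_def by auto
  have pr': "Div G M \<delta> = Div G M \<Delta> \<inter> monoid_gen G (Div G M \<delta>)" using pr Ndef by simp
  interpret GS G M \<Delta> \<delta>
    apply unfold_locales
    using s1 apply blast
    using s1 apply blast
    using s1 apply blast
    using ptz apply blast
    using bD apply blast
    using bd apply blast
    using gD apply blast
    using lt apply blast
    using pr' apply blast
    done
  have Dc: "\<Delta> \<in> carrier G" by simp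
  have th: "HN_reduced G M \<Delta> \<delta> \<theta>" "\<theta> \<notin> M" using assms(3,4) by auto
  then obtain a q where rf: "right_form G M \<Delta> \<theta> a q"
    and alt: "q = 0 \<or> (q < 0 \<and> \<not> leL G M (inv \<delta> \<otimes> \<Delta>) a)"
    by (auto simp: HN_reduced_def)
  have aM: "a \<in> M" "\<not> leL G M \<Delta> a" and th_eq: "\<theta> = a \<otimes> \<Delta> [^] q"
    using rf by (auto simp: right_form_def unmovable_def)
  have cM: "c \<in> M" "\<not> leL G M \<Delta> c" and th_eq2: "\<theta> = c \<otimes> \<Delta> [^] (- p)"
    using assms(5) by (auto simp: right_form_def unmovable_def)
  have "q \<noteq> 0" using th th_eq aM by auto
  hence q: "q < 0" and aw: "\<not> leL G M (inv \<delta> \<otimes> \<Delta>) a" using alt by auto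
  define P where "P = nat p"
  define Q where "Q = nat (- q)"
  have P: "p = int P" using assms(6) P_def by simp
  have Q: "- q = int Q" using q Q_def by simp
  have e1: "\<Delta> [^] (- p) = inv (\<Delta> [^] P)" using P int_pow_neg_int[OF Dc] by simp
  have e2: "\<Delta> [^] q = inv (\<Delta> [^] Q)" using Q int_pow_neg_int[OF Dc, of Q] by (metis minus_minus)
  have "c \<otimes> inv (\<Delta> [^] P) = a \<otimes> inv (\<Delta> [^] Q)" using th_eq th_eq2 e1 e2 by simp
  hence "c = a" using rf_unique[OF aM cM] by simp
  hence cw: "\<not> leL G M (inv \<delta> \<otimes> \<Delta>) c" using aw by simp
  have bNM: "b \<in> M" using assms(7) Ndef N_M by auto
  have un: "unmovable G M \<Delta> (b \<otimes> c)"
    unfolding unmovable_def using mainlem[OF cM cw] assms(7) Ndef multM[OF bNM cM(1)] by simp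
  have "b \<otimes> \<theta> = (b \<otimes> c) \<otimes> \<Delta> [^] (- p)" using th_eq2 bNM cM by (simp add: m_assoc)
  thus ?thesis using un by (simp add: right_form_def)
qed

end
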